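(* Let $n \ge 2$ and $X_0, Y_0 \in \mathrm{S}^{n-1}$. Construct a pair of processes $\{(X_t, Y_t)\}_{t \ge 0}$ by applying, at every step $t \ge 0$ and conditionally on $(X_t, Y_t)$, the proportional coupling described in the context. Then for every $t \ge 0$, $$\mathbb{E}\Big[\sum_{i=1}^n \big(X_t[i]^2 - Y_t[i]^2\big)^2\Big] \le 2\Big(1 - \frac{1}{2n}\Big)^t.$$
   Context: $\mathrm{S}^{n-1} = \{X \in \mathbb{R}^n : \sum_{i=1}^n X[i]^2 = 1\}$. For $1 \le i < j \le n$, $\theta \in [0,2\pi)$ and $X \in \mathrm{S}^{n-1}$, let $\mathrm{F}(i,j,\theta,X) \in \mathrm{S}^{n-1}$ be the vector obtained from $X$ by replacing $(X[i], X[j])$ with $(\cos(\theta)X[i] - \sin(\theta)X[j],\ \sin(\theta)X[i] + \cos(\theta)X[j])$ and leaving all other coordinates unchanged. (Kac's walk is $X_{t+1} = \mathrm{F}(i_t,j_t,\theta_t,X_t)$ with $(i_t,j_t)$ uniform among pairs $i<j$ and $\theta_t$ uniform on $[0,2\pi)$, all independent.) Proportional coupling of one step from $(X_t, Y_t)$: choose $1 \le i < j \le n$ uniformly among all pairs and $\theta \in [0,2\pi)$ uniformly, independently, and set $X_{t+1} = \mathrm{F}(i,j,\theta,X_t)$. Then choose $\varphi \in [0,2\pi)$ uniformly at random among all angles satisfying $X_{t+1}[i] = \sqrt{X_t[i]^2 + X_t[j]^2}\cos(\varphi)$ and $X_{t+1}[j] = \sqrt{X_t[i]^2 + X_t[j]^2}\sin(\varphi)$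 (the solution is unique unless $X_t[i]=X_t[j]=0$, in which case every angle qualifies). Then choose $\theta' \in [0,2\pi)$ uniformly among the angles satisfying $\mathrm{F}(i,j,\theta',Y_t)[i] = \sqrt{Y_t[i]^2 + Y_t[j]^2}\cos(\varphi)$ and $\mathrm{F}(i,j,\theta',Y_t)[j] = \sqrt{Y_t[i]^2 + Y_t[j]^2}\sin(\varphi)$, and set $Y_{t+1} = \mathrm{F}(i,j,\theta',Y_t)$. Each marginal process is then a copy of Kac's walk. *)

theory Defs
  imports "HOL-Probability.Probability"
begin

text \<open>Vectors of R^n are functions nat => real; coordinates are indexed 0..n-1
  (the paper's index i corresponds to i-1 here).\<close>

definition on_sphere :: "nat \<Rightarrow> (nat \<Rightarrow> real) \<Rightarrow> bool" where
  "on_sphere n X \<longleftrightarrow> (\<Sum>i<n. (X i)^2) = 1"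

definition F :: "nat \<Rightarrow> nat \<Rightarrow> real \<Rightarrow> (nat \<Rightarrow> real) \<Rightarrow> (nat \<Rightarrow> real)" where
  "F i j \<theta> X = X(i := cos \<theta> * X i - sin \<theta> * X j, j := sin \<theta> * X i + cos \<theta> * X j)"

text \<open>The angle phi: the unique angle in [0,2pi) with X'[i] = r cos phi, X'[j] = r sin phi,
  r = sqrt(X[i]^2+X[j]^2); if X[i]=X[j]=0 every angle qualifies and the auxiliary uniform
  angle psi is used.\<close>
definition coupling_phi :: "nat \<Rightarrow> nat \<Rightarrow> (nat \<Rightarrow> real) \<Rightarrow> (nat \<Rightarrow> real) \<Rightarrow> real \<Rightarrow> real" where
  "coupling_phi i j X X' \<psi> =
     (if X i = 0 \<and> X j = 0 then \<psi>
      else (THE \<phi>. 0 \<le> \<phi> \<and> \<phi> < 2 * pi \<and>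
              X' i = sqrt ((X i)^2 + (X j)^2) * cos \<phi> \<and>
              X' j = sqrt ((X i)^2 + (X j)^2) * sin \<phi>))"

text \<open>The angle theta': unique angle in [0,2pi) with F(i,j,theta',Y) having polar angle phi in
  coordinates (i,j); if Y[i]=Y[j]=0 every angle qualifies and the auxiliary uniform angle eta is used.\<close>
definition coupling_theta2 :: "nat \<Rightarrow> nat \<Rightarrow> (nat \<Rightarrow> real) \<Rightarrow> real \<Rightarrow> real \<Rightarrow> real" where
  "coupling_theta2 i j Y \<phi> \<eta> =
     (if Y i = 0 \<and> Y j = 0 then \<eta>
      else (THE \<theta>2. 0 \<le> \<theta>2 \<and> \<theta>2 < 2 * pi \<and>
              F i j \<theta>2 Y i = sqrt ((Y i)^2 + (Y j)^2) * cos \<phi> \<and>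
              F i j \<theta>2 Y j = sqrt ((Y i)^2 + (Y j)^2) * sin \<phi>))"

definition coupling_step ::
  "(nat \<Rightarrow> real) \<times> (nat \<Rightarrow> real) \<Rightarrow> (nat \<times> nat) \<times> real \<times> real \<times> real
     \<Rightarrow> (nat \<Rightarrow> real) \<times> (nat \<Rightarrow> real)" where
  "coupling_step XY inp =
     (let X = fst XY; Y = snd XY; i = fst (fst inp); j = snd (fst inp);
          \<theta> = fst (snd inp); \<psi> = fst (snd (snd inp)); \<eta> = snd (snd (snd inp));
          X' = F i j \<theta> X;
          \<phi> = coupling_phi i j X X' \<psi>;
          \<theta>2 = coupling_theta2 i j Y \<phi> \<eta>
      in (X', F i j \<theta>2 Y))"

definition uniform_angle :: "real measure" where
  "uniform_angle = uniform_measure lborel {0..<2 * pi}"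

text \<open>Law of the per-step input: pair (i,j), i<j<n, uniform; theta uniform; plus two
  independent uniform auxiliary angles used for the tie-breaking choices; all independent.\<close>
definition coupling_input :: "nat \<Rightarrow> ((nat \<times> nat) \<times> real \<times> real \<times> real) measure" where
  "coupling_input n = uniform_count_measure {(i, j). i < j \<and> j < n}
      \<Otimes>\<^sub>M (uniform_angle \<Otimes>\<^sub>M (uniform_angle \<Otimes>\<^sub>M uniform_angle))"

fun coupled_process ::
  "(nat \<Rightarrow> real) \<Rightarrow> (nat \<Rightarrow> real) \<Rightarrow> ((nat \<times> nat) \<times> real \<times> real \<times> real) stream
     \<Rightarrow> nat \<Rightarrow> (nat \<Rightarrow> real) \<times> (nat \<Rightarrow> real)" where
  "coupled_process X0 Y0 \<omega> 0 = (X0, Y0)"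
| "coupled_process X0 Y0 \<omega> (Suc t) = coupling_step (coupled_process X0 Y0 \<omega> t) (\<omega> !! t)"

end

theory Submission
  imports Defs
begin

lemma angle_unique:
  fixes a b :: real
  assumes "0 \<le> a" "a < 2*pi" "0 \<le> b" "b < 2*pi" "cos a = cos b" "sin a = sin b"
  shows "a = b"
proof -
  obtain m :: int where m: "a = b + 2*pi*m" using sin_cos_eq_iff assms(5,6) by metis
  have "2*pi*m < 2*pi*1" using m assms by linarith
  hence "real_of_int m < 1" using mult_less_cancel_left_pos[of "2*pi" "real_of_int m" 1] pi_gt_zero by linarith
  hence "m < 1" by simp
  moreover have "2*pi*(-1) < 2*pi*m" using m assms by linarith
  hence "-1 < real_of_int m" using mult_less_cancel_left_pos[of "2*pi" "-1" "real_of_int m"] pi_gt_zero by linarith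
  hence "-1 < m" by simp
  ultimately have "m = 0" by simp
  thus ?thesis using m by simp
qed

lemma F_i: "i \<noteq> j \<Longrightarrow> F i j \<theta> X i = cos \<theta> * X i - sin \<theta> * X j"
  by (simp add: F_def)
lemma F_j: "F i j \<theta> X j = sin \<theta> * X i + cos \<theta> * X j"
  by (simp add: F_def)
lemma F_other: "k \<noteq> i \<Longrightarrow> k \<noteq> j \<Longrightarrow> F i j \<theta> X k = X k"
  by (simp add: F_def)

lemma rot_norm_aux: "(cc * x - ss * y) * (cc * x - ss * y) + (ss * x + cc * y) * (ss * x + cc * y) = (ss * ss + cc * cc) * (x * x + y * (y::real))"
  by algebra

lemma sq_aux2: "(x * cc + y * ss)^2 + (x * ss - y * cc)^2 = (x^2 + y^2) * (ss^2 + (cc::real)^2)"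
  unfolding power2_eq_square by algebra

lemma aux_e1: "((x * cc + y * ss)/r) * x - ((x * ss - y * cc)/r) * y = cc * (x^2+y^2)/(r::real)"
proof -
  have "(x * cc + y * ss) * x - (x * ss - y * cc) * y = cc * (x^2+y^2)" unfolding power2_eq_square by algebra
  thus ?thesis by (metis (no_types, lifting) diff_divide_distrib times_divide_eq_left)
qed
lemma aux_e2: "((x * ss - y * cc)/r) * x + ((x * cc + y * ss)/r) * y = ss * (x^2+y^2)/(r::real)"
proof -
  have "(x * ss - y * cc) * x + (x * cc + y * ss) * y = ss * (x^2+y^2)" unfolding power2_eq_square by algebra
  thus ?thesis by (metis (no_types, lifting) add_divide_distrib times_divide_eq_left)
qed

lemma rot_norm: "(cos t * x - sin t * (y::real))^2 + (sin t * x + cos t * y)^2 = x^2 + y^2"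
proof -
  have "(cos t * x - sin t * y)^2 + (sin t * x + cos t * y)^2 = ((sin t)^2 + (cos t)^2) * (x^2+y^2)"
    unfolding power2_eq_square by (rule rot_norm_aux)
  thus ?thesis by simp
qed

lemma phi_prop:
  assumes ij: "i \<noteq> j" and nz: "\<not> (X i = 0 \<and> X j = 0)"
  and X'_def: "X' = F i j \<theta> X"
  shows "X' i = sqrt ((X i)^2 + (X j)^2) * cos (coupling_phi i j X X' \<psi>) \<and>
         X' j = sqrt ((X i)^2 + (X j)^2) * sin (coupling_phi i j X X' \<psi>)"
proof -
  define r where "r = sqrt ((X i)^2 + (X j)^2)"
  have r2: "r^2 = (X i)^2 + (X j)^2" unfolding r_def by simp
  have "(X i)^2 + (X j)^2 \<noteq> 0" using nz by (simp add: sum_power2_eq_zero_iff)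
  hence "(X i)^2 + (X j)^2 > 0" using sum_power2_ge_zero[of "X i" "X j"] by linarith
  hence rpos: "r > 0" unfolding r_def by simp
  have nX: "(X' i)^2 + (X' j)^2 = r^2" unfolding X'_def r2 using F_i[OF ij] F_j rot_norm by metis
  have "(X' i / r)^2 + (X' j / r)^2 = 1" using nX rpos by (simp add: power_divide field_simps)
  then obtain t where t: "0 \<le> t" "t < 2*pi" "X' i / r = cos t" "X' j / r = sin t"
    by (rule sincos_total_2pi)
  let ?P = "\<lambda>\<phi>. 0 \<le> \<phi> \<and> \<phi> < 2 * pi \<and> X' i = r * cos \<phi> \<and> X' j = r * sin \<phi>"
  have Pt: "?P t" using t rpos by (simp add: field_simps)
  have uq: "\<phi> = t" if "?P \<phi>" for \<phi>
  proof -
    have "cos \<phi> = cos t" "sin \<phi> = sin t" using that t rpos by (auto simp: field_simps)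
    thus ?thesis using angle_unique[of \<phi> t] that t by simp
  qed
  have "?P (THE \<phi>. ?P \<phi>)" by (rule theI[of ?P t, OF Pt uq])
  moreover have "coupling_phi i j X X' \<psi> = (THE \<phi>. ?P \<phi>)"
    unfolding coupling_phi_def r_def by (rule if_not_P[OF nz])
  ultimately show ?thesis unfolding r_def by simp
qed

lemma theta2_prop:
  assumes ij: "i \<noteq> j" and nz: "\<not> (Y i = 0 \<and> Y j = 0)"
  shows "F i j (coupling_theta2 i j Y \<phi> \<eta>) Y i = sqrt ((Y i)^2 + (Y j)^2) * cos \<phi> \<and>
         F i j (coupling_theta2 i j Y \<phi> \<eta>) Y j = sqrt ((Y i)^2 + (Y j)^2) * sin \<phi>"
proof -
  define r where "r = sqrt ((Y i)^2 + (Y j)^2)"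
  have r2: "r^2 = (Y i)^2 + (Y j)^2" unfolding r_def by simp
  have "(Y i)^2 + (Y j)^2 \<noteq> 0" using nz by (simp add: sum_power2_eq_zero_iff)
  hence "(Y i)^2 + (Y j)^2 > 0" using sum_power2_ge_zero[of "Y i" "Y j"] by linarith
  hence rpos: "r > 0" unfolding r_def by simp
  define c where "c = (Y i * cos \<phi> + Y j * sin \<phi>) / r"
  define s where "s = (Y i * sin \<phi> - Y j * cos \<phi>) / r"
  have "c^2 + s^2 = ((Y i)^2 + (Y j)^2) * ((sin \<phi>)^2 + (cos \<phi>)^2) / r^2"
    unfolding c_def s_def power_divide add_divide_distrib[symmetric] by (simp only: sq_aux2)
  hence "c^2 + s^2 = r^2 / r^2" using r2 by (simp only: sin_cos_squared_add mult_1_right)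
  hence "c^2 + s^2 = 1" using rpos by simp
  then obtain t where t: "0 \<le> t" "t < 2*pi" "c = cos t" "s = sin t"
    by (rule sincos_total_2pi)
  let ?P = "\<lambda>\<theta>2. 0 \<le> \<theta>2 \<and> \<theta>2 < 2 * pi \<and> F i j \<theta>2 Y i = r * cos \<phi> \<and> F i j \<theta>2 Y j = r * sin \<phi>"
  have e1: "c * Y i - s * Y j = r * cos \<phi>"
    unfolding c_def s_def aux_e1 r2[symmetric] using rpos by (simp add: power2_eq_square)
  have e2: "s * Y i + c * Y j = r * sin \<phi>"
    unfolding c_def s_def aux_e2 r2[symmetric] using rpos by (simp add: power2_eq_square)
  have Pt: "?P t" using t e1 e2 by (simp add: F_i[OF ij] F_j)
  have uq: "\<theta> = t" if "?P \<theta>" for \<theta>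
  proof -
    have a1: "cos \<theta> * Y i - sin \<theta> * Y j = r * cos \<phi>" "sin \<theta> * Y i + cos \<theta> * Y j = r * sin \<phi>"
      using that by (simp_all add: F_i[OF ij] F_j)
    have "r^2 * cos \<theta> = Y i * (cos \<theta> * Y i - sin \<theta> * Y j) + Y j * (sin \<theta> * Y i + cos \<theta> * Y j)"
      using r2 unfolding power2_eq_square by algebra
    also have "\<dots> = r * (Y i * cos \<phi> + Y j * sin \<phi>)" unfolding a1 by algebra
    finally have "r * (r * cos \<theta>) = r * (c * r)" unfolding c_def using rpos by (simp add: power2_eq_square)
    hence "cos \<theta> = c" using rpos by simp
    have "r^2 * sin \<theta> = Y i * (sin \<theta> * Y i + cos \<theta> * Y j) - Y j * (cos \<theta> * Y i - sin \<theta> * Y j)"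
      using r2 unfolding power2_eq_square by algebra
    also have "\<dots> = r * (Y i * sin \<phi> - Y j * cos \<phi>)" unfolding a1 by algebra
    finally have "r * (r * sin \<theta>) = r * (s * r)" unfolding s_def using rpos by (simp add: power2_eq_square)
    hence "sin \<theta> = s" using rpos by simp
    show ?thesis using angle_unique[of \<theta> t] that t \<open>cos \<theta> = c\<close> \<open>sin \<theta> = s\<close> by simp
  qed
  have "?P (THE \<theta>. ?P \<theta>)" by (rule theI[of ?P t, OF Pt uq])
  moreover have "coupling_theta2 i j Y \<phi> \<eta> = (THE \<theta>. ?P \<theta>)"
    unfolding coupling_theta2_def r_def by (rule if_not_P[OF nz])
  ultimately show ?thesis unfolding r_def by simp
qed

definition step' :: "(nat \<Rightarrow> real) \<times> (nat \<Rightarrow> real) \<Rightarrow> (nat \<times> nat) \<times> real \<times> real \<times> real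
     \<Rightarrow> (nat \<Rightarrow> real) \<times> (nat \<Rightarrow> real)" where
  "step' XY inp = (let X = fst XY; Y = snd XY; i = fst (fst inp); j = snd (fst inp);
     \<theta> = fst (snd inp); \<psi> = fst (snd (snd inp));
     X' = F i j \<theta> X;
     rX = sqrt ((X i)^2 + (X j)^2); rY = sqrt ((Y i)^2 + (Y j)^2);
     c = (if X i = 0 \<and> X j = 0 then cos \<psi> else X' i / rX);
     s = (if X i = 0 \<and> X j = 0 then sin \<psi> else X' j / rX)
   in (X', Y(i := rY * c, j := rY * s)))"

lemma pos_of_nz:
  assumes "\<not> (x = 0 \<and> y = (0::real))" shows "sqrt (x^2 + y^2) > 0"
proof -
  have "x^2 + y^2 \<noteq> 0" using assms by (simp add: sum_power2_eq_zero_iff)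
  hence "x^2 + y^2 > 0" using sum_power2_ge_zero[of x y] by linarith
  thus ?thesis by simp
qed

lemma step_eq0:
  assumes ij: "i \<noteq> j"
  shows "coupling_step (X, Y) ((i, j), \<theta>, \<psi>, \<eta>) = step' (X, Y) ((i, j), \<theta>, \<psi>, \<eta>)"
proof -
  define X' where "X' = F i j \<theta> X"
  define \<phi> where "\<phi> = coupling_phi i j X X' \<psi>"
  define rX where "rX = sqrt ((X i)^2 + (X j)^2)"
  define rY where "rY = sqrt ((Y i)^2 + (Y j)^2)"
  define c where "c = (if X i = 0 \<and> X j = 0 then cos \<psi> else X' i / rX)"
  define s where "s = (if X i = 0 \<and> X j = 0 then sin \<psi> else X' j / rX)"
  have cs: "cos \<phi> = c \<and> sin \<phi> = s"
  proof (cases "X i = 0 \<and> X j = 0")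
    case True then show ?thesis by (simp add: \<phi>_def coupling_phi_def c_def s_def)
  next
    case False
    have rpos: "rX > 0" unfolding rX_def by (rule pos_of_nz[OF False])
    from phi_prop[OF ij False X'_def, of \<psi>] have "X' i = rX * cos \<phi> \<and> X' j = rX * sin \<phi>"
      by (simp add: \<phi>_def rX_def)
    moreover have "c = X' i / rX" "s = X' j / rX" unfolding c_def s_def if_not_P[OF False] by simp_all
    ultimately show ?thesis using rpos by simp
  qed
  have Yeq: "F i j (coupling_theta2 i j Y \<phi> \<eta>) Y = Y(i := rY * c, j := rY * s)"
  proof (cases "Y i = 0 \<and> Y j = 0")
    case True then show ?thesis by (auto simp: F_def rY_def coupling_theta2_def)
  next
    case False
    from theta2_prop[OF ij False, of \<phi> \<eta>] cs
    have "F i j (coupling_theta2 i j Y \<phi> \<eta>) Y i = rY * c" "F i j (coupling_theta2 i j Y \<phi> \<eta>) Y j = rY * s"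
      by (simp_all add: rY_def)
    thus ?thesis using ij by (auto simp: fun_eq_iff F_other)
  qed
  have e1: "step' (X, Y) ((i, j), \<theta>, \<psi>, \<eta>) = (X', Y(i := rY * c, j := rY * s))"
    unfolding step'_def Let_def X'_def rY_def c_def s_def rX_def by (simp split del: if_split cong: if_cong)
  have e2: "coupling_step (X, Y) ((i, j), \<theta>, \<psi>, \<eta>) = (X', F i j (coupling_theta2 i j Y \<phi> \<eta>) Y)"
    unfolding coupling_step_def Let_def X'_def \<phi>_def by simp
  show ?thesis unfolding e1 e2 Yeq ..
qed

lemma step_eq:
  assumes "fst (fst inp) \<noteq> snd (fst inp)"
  shows "coupling_step XY inp = step' XY inp"
proof -
  obtain X Y where XY: "XY = (X, Y)" by (cases XY)
  obtain i j \<theta> \<psi> \<eta> where inp: "inp = ((i, j), \<theta>, \<psi>, \<eta>)" by (metis prod.exhaust)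
  show ?thesis using assms step_eq0 unfolding XY inp by simp
qed

fun proc' :: "(nat \<Rightarrow> real) \<times> (nat \<Rightarrow> real) \<Rightarrow> ((nat \<times> nat) \<times> real \<times> real \<times> real) stream
     \<Rightarrow> nat \<Rightarrow> (nat \<Rightarrow> real) \<times> (nat \<Rightarrow> real)" where
  "proc' XY \<omega> 0 = XY"
| "proc' XY \<omega> (Suc t) = step' (proc' XY \<omega> t) (\<omega> !! t)"

lemma proc_eq:
  assumes "\<And>t. fst (fst (\<omega> !! t)) \<noteq> snd (fst (\<omega> !! t))"
  shows "coupled_process X0 Y0 \<omega> t = proc' (X0, Y0) \<omega> t"
  by (induction t) (simp_all add: step_eq assms)

lemma proc_first:
  "proc' XY (x ## \<omega>) (Suc t) = proc' (step' XY x) \<omega> t"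
  by (induction t) simp_all

lemma sum_split2:
  fixes f :: "nat \<Rightarrow> real"
  assumes "i < n" "j < n" "i \<noteq> j"
  shows "(\<Sum>k<n. f k) = f i + f j + (\<Sum>k\<in>{..<n} - {i, j}. f k)"
proof -
  have "(\<Sum>k<n. f k) = f i + (\<Sum>k\<in>{..<n} - {i}. f k)"
    using assms by (simp add: sum.remove)
  also have "(\<Sum>k\<in>{..<n} - {i}. f k) = f j + (\<Sum>k\<in>{..<n} - {i} - {j}. f k)"
    using assms by (subst sum.remove[of _ j]) auto
  also have "{..<n} - {i} - {j} = {..<n} - {i, j}" by auto
  finally show ?thesis by simp
qed

lemma step'_outside:
  assumes "k \<noteq> fst (fst inp)" "k \<noteq> snd (fst inp)"
  shows "fst (step' XY inp) k = fst XY k" "snd (step' XY inp) k = snd XY k"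
  using assms by (simp_all add: step'_def Let_def F_other)

lemma step'_coords:
  fixes X Y :: "nat \<Rightarrow> real" and \<theta> \<psi> :: real
  assumes ij: "i \<noteq> j"
  defines "c \<equiv> (if X i = 0 \<and> X j = 0 then cos \<psi> else F i j \<theta> X i / sqrt ((X i)^2 + (X j)^2))"
  defines "s \<equiv> (if X i = 0 \<and> X j = 0 then sin \<psi> else F i j \<theta> X j / sqrt ((X i)^2 + (X j)^2))"
  shows "(fst (step' (X, Y) ((i,j),\<theta>,\<psi>,\<eta>)) i)^2 = ((X i)^2 + (X j)^2) * c^2"
    "(fst (step' (X, Y) ((i,j),\<theta>,\<psi>,\<eta>)) j)^2 = ((X i)^2 + (X j)^2) * s^2"
    "(snd (step' (X, Y) ((i,j),\<theta>,\<psi>,\<eta>)) i)^2 = ((Y i)^2 + (Y j)^2) * c^2"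
    "(snd (step' (X, Y) ((i,j),\<theta>,\<psi>,\<eta>)) j)^2 = ((Y i)^2 + (Y j)^2) * s^2"
    "c^2 + s^2 = 1"
proof -
  have st: "step' (X, Y) ((i,j),\<theta>,\<psi>,\<eta>) = (F i j \<theta> X, Y(i := sqrt ((Y i)^2 + (Y j)^2) * c, j := sqrt ((Y i)^2 + (Y j)^2) * s))"
    unfolding step'_def Let_def c_def s_def by (simp split del: if_split cong: if_cong)
  have nn: "(X i)^2 + (X j)^2 \<ge> 0" "(Y i)^2 + (Y j)^2 \<ge> 0" by simp_all
  have A: "(F i j \<theta> X i)^2 = ((X i)^2 + (X j)^2) * c^2 \<and> (F i j \<theta> X j)^2 = ((X i)^2 + (X j)^2) * s^2 \<and> c^2 + s^2 = 1"
  proof (cases "X i = 0 \<and> X j = 0")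
    case True thus ?thesis using ij unfolding c_def s_def if_P[OF True] by (simp add: F_i F_j)
  next
    case False
    have rpos: "sqrt ((X i)^2 + (X j)^2) > 0" by (rule pos_of_nz[OF False])
    have nX: "(F i j \<theta> X i)^2 + (F i j \<theta> X j)^2 = (X i)^2 + (X j)^2"
      using F_i[OF ij] F_j rot_norm by metis
    have "c^2 + s^2 = ((F i j \<theta> X i)^2 + (F i j \<theta> X j)^2) / (sqrt ((X i)^2 + (X j)^2))^2"
      unfolding c_def s_def if_not_P[OF False] by (simp add: power_divide add_divide_distrib)
    also have "\<dots> = 1" using nX rpos False by simp
    finally show ?thesis using rpos False unfolding c_def s_def if_not_P[OF False] by (simp add: power_divide)
  qed
  show "(fst (step' (X, Y) ((i,j),\<theta>,\<psi>,\<eta>)) i)^2 = ((X i)^2 + (X j)^2) * c^2"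
    "(fst (step' (X, Y) ((i,j),\<theta>,\<psi>,\<eta>)) j)^2 = ((X i)^2 + (X j)^2) * s^2" "c^2 + s^2 = 1"
    using A by (simp_all add: st)
  show "(snd (step' (X, Y) ((i,j),\<theta>,\<psi>,\<eta>)) i)^2 = ((Y i)^2 + (Y j)^2) * c^2"
    "(snd (step' (X, Y) ((i,j),\<theta>,\<psi>,\<eta>)) j)^2 = ((Y i)^2 + (Y j)^2) * s^2"
    using ij by (simp_all add: st power_mult_distrib)
qed

definition Dist :: "nat \<Rightarrow> (nat \<Rightarrow> real) \<times> (nat \<Rightarrow> real) \<Rightarrow> real" where
  "Dist n XY = (\<Sum>k<n. ((fst XY k)^2 - (snd XY k)^2)^2)"

definition uu :: "real \<Rightarrow> real \<Rightarrow> real \<Rightarrow> real" where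
  "uu x y t = (cos t * x - sin t * y) * (sin t * x + cos t * y)"

definition kk :: "(nat \<Rightarrow> real) \<Rightarrow> nat \<Rightarrow> nat \<Rightarrow> real \<Rightarrow> real \<Rightarrow> real" where
  "kk X i j \<theta> \<psi> = (if X i = 0 \<and> X j = 0 then 2 * (uu 1 0 \<psi>)^2
      else 2 * (uu (X i) (X j) \<theta>)^2 / ((X i)^2 + (X j)^2)^2)"

lemma norm_step:
  assumes "i < n" "j < n" "i \<noteq> j"
  shows "(\<Sum>k<n. (fst (step' (X, Y) ((i,j),\<theta>,\<psi>,\<eta>)) k)^2) = (\<Sum>k<n. (X k)^2)"
    "(\<Sum>k<n. (snd (step' (X, Y) ((i,j),\<theta>,\<psi>,\<eta>)) k)^2) = (\<Sum>k<n. (Y k)^2)"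
proof -
  note C = step'_coords(1)[where X=X and Y=Y and \<theta>=\<theta> and \<psi>=\<psi> and \<eta>=\<eta>, OF assms(3)] step'_coords(2)[where X=X and Y=Y and \<theta>=\<theta> and \<psi>=\<psi> and \<eta>=\<eta>, OF assms(3)] step'_coords(3)[where X=X and Y=Y and \<theta>=\<theta> and \<psi>=\<psi> and \<eta>=\<eta>, OF assms(3)] step'_coords(4)[where X=X and Y=Y and \<theta>=\<theta> and \<psi>=\<psi> and \<eta>=\<eta>, OF assms(3)] step'_coords(5)[where X=X and \<theta>=\<theta> and \<psi>=\<psi>, OF assms(3)]
  have rest: "(\<Sum>k\<in>{..<n} - {i, j}. (fst (step' (X, Y) ((i,j),\<theta>,\<psi>,\<eta>)) k)^2) = (\<Sum>k\<in>{..<n} - {i, j}. (X k)^2)"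
     "(\<Sum>k\<in>{..<n} - {i, j}. (snd (step' (X, Y) ((i,j),\<theta>,\<psi>,\<eta>)) k)^2) = (\<Sum>k\<in>{..<n} - {i, j}. (Y k)^2)"
    by (auto intro!: sum.cong simp: step'_outside)
  show "(\<Sum>k<n. (fst (step' (X, Y) ((i,j),\<theta>,\<psi>,\<eta>)) k)^2) = (\<Sum>k<n. (X k)^2)"
    unfolding sum_split2[OF assms, of "\<lambda>k. (fst (step' (X, Y) ((i,j),\<theta>,\<psi>,\<eta>)) k)^2"]
      sum_split2[OF assms, of "\<lambda>k. (X k)^2"] rest C(1,2)
    by (simp add: distrib_left[symmetric] C(5))
  show "(\<Sum>k<n. (snd (step' (X, Y) ((i,j),\<theta>,\<psi>,\<eta>)) k)^2) = (\<Sum>k<n. (Y k)^2)"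
    unfolding sum_split2[OF assms, of "\<lambda>k. (snd (step' (X, Y) ((i,j),\<theta>,\<psi>,\<eta>)) k)^2"]
      sum_split2[OF assms, of "\<lambda>k. (Y k)^2"] rest C(3,4)
    by (simp add: distrib_left[symmetric] C(5))
qed

lemma cs_aux: "c^2 + s^2 = (1::real) \<Longrightarrow> (A * c^2)^2 + (A * s^2)^2 = A^2 * (1 - 2 * (c * s)^2)"
proof -
  assume h: "c^2 + s^2 = 1"
  have "(A * c^2)^2 + (A * s^2)^2 = A^2 * ((c^2 + s^2)^2 - 2 * (c * s)^2)"
    unfolding power2_eq_square by algebra
  thus ?thesis using h by simp
qed

lemma dist_step:
  assumes "i < n" "j < n" "i \<noteq> j"
  shows "Dist n (step' (X, Y) ((i,j),\<theta>,\<psi>,\<eta>)) =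
     (\<Sum>k\<in>{..<n} - {i, j}. ((X k)^2 - (Y k)^2)^2)
     + ((X i)^2 - (Y i)^2 + ((X j)^2 - (Y j)^2))^2 * (1 - kk X i j \<theta> \<psi>)"
proof -
  define c where "c = (if X i = 0 \<and> X j = 0 then cos \<psi> else F i j \<theta> X i / sqrt ((X i)^2 + (X j)^2))"
  define s where "s = (if X i = 0 \<and> X j = 0 then sin \<psi> else F i j \<theta> X j / sqrt ((X i)^2 + (X j)^2))"
  note C = step'_coords(1)[where X=X and Y=Y and \<theta>=\<theta> and \<psi>=\<psi> and \<eta>=\<eta>, OF assms(3)] step'_coords(2)[where X=X and Y=Y and \<theta>=\<theta> and \<psi>=\<psi> and \<eta>=\<eta>, OF assms(3)] step'_coords(3)[where X=X and Y=Y and \<theta>=\<theta> and \<psi>=\<psi> and \<eta>=\<eta>, OF assms(3)] step'_coords(4)[where X=X and Y=Y and \<theta>=\<theta> and \<psi>=\<psi> and \<eta>=\<eta>, OF assms(3)] step'_coords(5)[where X=X and \<theta>=\<theta> and \<psi>=\<psi>, OF assms(3)]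
  note C = C[folded c_def s_def]
  define A where "A = (X i)^2 - (Y i)^2 + ((X j)^2 - (Y j)^2)"
  let ?S = "step' (X, Y) ((i,j),\<theta>,\<psi>,\<eta>)"
  have rest: "(\<Sum>k\<in>{..<n} - {i, j}. ((fst ?S k)^2 - (snd ?S k)^2)^2) = (\<Sum>k\<in>{..<n} - {i, j}. ((X k)^2 - (Y k)^2)^2)"
    by (auto intro!: sum.cong simp: step'_outside)
  have di: "(fst ?S i)^2 - (snd ?S i)^2 = A * c^2" unfolding C(1,3) A_def by (simp add: algebra_simps)
  have dj: "(fst ?S j)^2 - (snd ?S j)^2 = A * s^2" unfolding C(2,4) A_def by (simp add: algebra_simps)
  have kk: "kk X i j \<theta> \<psi> = 2 * (c * s)^2"
  proof (cases "X i = 0 \<and> X j = 0")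
    case True thus ?thesis unfolding kk_def c_def s_def if_P[OF True] by (simp add: uu_def)
  next
    case False
    have rpos: "sqrt ((X i)^2 + (X j)^2) > 0" by (rule pos_of_nz[OF False])
    have "c * s = uu (X i) (X j) \<theta> / ((X i)^2 + (X j)^2)"
      unfolding c_def s_def if_not_P[OF False] using rpos assms(3)
      by (simp add: uu_def F_i F_j)
    thus ?thesis unfolding kk_def if_not_P[OF False] by (simp add: power_divide)
  qed
  show ?thesis
    unfolding Dist_def fst_conv snd_conv sum_split2[OF assms, of "\<lambda>k. ((fst ?S k)^2 - (snd ?S k)^2)^2"] rest di dj
      cs_aux[OF C(5)] kk A_def
    by simp
qed

definition Pairs :: "nat \<Rightarrow> (nat \<times> nat) set" where
  "Pairs n = {(i, j). i < j \<and> j < n}"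

lemma finite_Pairs: "finite (Pairs n)"
  by (rule finite_subset[of _ "{..<n} \<times> {..<n}"]) (auto simp: Pairs_def)

lemma sym_pair_sum:
  fixes f :: "nat \<Rightarrow> nat \<Rightarrow> real"
  assumes sym: "\<And>i j. f i j = f j i"
  shows "2 * (\<Sum>p\<in>Pairs n. f (fst p) (snd p)) = (\<Sum>i<n. \<Sum>j<n. f i j) - (\<Sum>i<n. f i i)"
proof -
  define Q where "Q = {(i, j). j < i \<and> i < n}"
  define Dg where "Dg = (\<lambda>i. (i, i)) ` {..<n}"
  have fQ: "finite Q" by (rule finite_subset[of _ "{..<n} \<times> {..<n}"]) (auto simp: Q_def)
  have fD: "finite Dg" unfolding Dg_def by simp
  have U: "{..<n} \<times> {..<n} = (Pairs n \<union> Q) \<union> Dg"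
    by (auto simp: Pairs_def Q_def Dg_def image_iff)
  have "(\<Sum>i<n. \<Sum>j<n. f i j) = (\<Sum>p\<in>{..<n} \<times> {..<n}. f (fst p) (snd p))"
    by (simp add: sum.cartesian_product case_prod_beta)
  also have "\<dots> = (\<Sum>p\<in>Pairs n \<union> Q. f (fst p) (snd p)) + (\<Sum>p\<in>Dg. f (fst p) (snd p))"
    unfolding U by (rule sum.union_disjoint) (use finite_Pairs fQ fD in \<open>auto simp: Pairs_def Q_def Dg_def\<close>)
  also have "(\<Sum>p\<in>Pairs n \<union> Q. f (fst p) (snd p)) = (\<Sum>p\<in>Pairs n. f (fst p) (snd p)) + (\<Sum>p\<in>Q. f (fst p) (snd p))"
    by (rule sum.union_disjoint) (use finite_Pairs fQ in \<open>auto simp: Pairs_def Q_def\<close>)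
  also have "(\<Sum>p\<in>Q. f (fst p) (snd p)) = (\<Sum>p\<in>Pairs n. f (fst p) (snd p))"
  proof -
    have "Q = prod.swap ` Pairs n" by (auto simp: Q_def Pairs_def image_iff)
    hence "(\<Sum>p\<in>Q. f (fst p) (snd p)) = (\<Sum>p\<in>Pairs n. f (snd p) (fst p))"
      by (simp add: sum.reindex)
    thus ?thesis using sym by simp
  qed
  also have "(\<Sum>p\<in>Dg. f (fst p) (snd p)) = (\<Sum>i<n. f i i)"
    unfolding Dg_def by (subst sum.reindex) (auto simp: inj_on_def)
  finally show ?thesis by simp
qed

lemma card_Pairs: "2 * real (card (Pairs n)) = real n * real n - real n"
  using sym_pair_sum[of "\<lambda>i j. 1" n] by simp

lemma pair_ineq:
  fixes a :: "nat \<Rightarrow> real"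
  assumes n: "n \<ge> 2" and s0: "(\<Sum>k<n. a k) = 0"
  shows "(\<Sum>p\<in>Pairs n. (\<Sum>k\<in>{..<n} - {fst p, snd p}. (a k)^2) + (a (fst p) + a (snd p))^2 * (3/4))
         / real (card (Pairs n)) \<le> (1 - 1 / (2 * real n)) * (\<Sum>k<n. (a k)^2)"
proof -
  define D where "D = (\<Sum>k<n. (a k)^2)"
  define N where "N = real (card (Pairs n))"
  have D0: "D \<ge> 0" unfolding D_def by (simp add: sum_nonneg)
  have trm: "(\<Sum>k\<in>{..<n} - {fst p, snd p}. (a k)^2) + (a (fst p) + a (snd p))^2 * (3/4)
       = D - (1/4) * ((a (fst p))^2 + (a (snd p))^2) + (3/2) * (a (fst p) * a (snd p))" if "p \<in> Pairs n" for p
  proof -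
    have "fst p < n" "snd p < n" "fst p \<noteq> snd p" using that by (auto simp: Pairs_def)
    from sum_split2[OF this, of "\<lambda>k. (a k)^2"]
    have "(\<Sum>k\<in>{..<n} - {fst p, snd p}. (a k)^2) = D - (a (fst p))^2 - (a (snd p))^2" unfolding D_def by simp
    thus ?thesis by (simp add: power2_eq_square algebra_simps)
  qed
  have S1: "2 * (\<Sum>p\<in>Pairs n. (a (fst p))^2 + (a (snd p))^2) = 2 * real n * D - 2 * D"
    using sym_pair_sum[of "\<lambda>i j. (a i)^2 + (a j)^2" n]
    by (simp add: sum.distrib D_def sum_distrib_left mult.assoc)
  have S2: "2 * (\<Sum>p\<in>Pairs n. a (fst p) * a (snd p)) = - D"
  proof -
    have "(\<Sum>i<n. \<Sum>j<n. a i * a j) = (\<Sum>k<n. a k) * (\<Sum>k<n. a k)"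
      by (simp add: sum_product)
    thus ?thesis using sym_pair_sum[of "\<lambda>i j. a i * a j" n] s0
      by (simp add: D_def power2_eq_square)
  qed
  have "(\<Sum>p\<in>Pairs n. (\<Sum>k\<in>{..<n} - {fst p, snd p}. (a k)^2) + (a (fst p) + a (snd p))^2 * (3/4))
      = (\<Sum>p\<in>Pairs n. D - (1/4) * ((a (fst p))^2 + (a (snd p))^2) + (3/2) * (a (fst p) * a (snd p)))"
    by (rule sum.cong[OF refl]) (rule trm)
  also have "\<dots> = N * D - (1/4) * (\<Sum>p\<in>Pairs n. (a (fst p))^2 + (a (snd p))^2) + (3/2) * (\<Sum>p\<in>Pairs n. a (fst p) * a (snd p))"
    unfolding sum.distrib sum_subtractf sum_distrib_left[symmetric] sum_constant N_def by simp
  also have "\<dots> = N * D - (real n + 2) * D / 4"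
  proof -
    have "(\<Sum>p\<in>Pairs n. (a (fst p))^2 + (a (snd p))^2) = real n * D - D" using S1 by linarith
    moreover have "(\<Sum>p\<in>Pairs n. a (fst p) * a (snd p)) = - D / 2" using S2 by linarith
    ultimately show ?thesis by (simp add: algebra_simps)
  qed
  finally have eq: "(\<Sum>p\<in>Pairs n. (\<Sum>k\<in>{..<n} - {fst p, snd p}. (a k)^2) + (a (fst p) + a (snd p))^2 * (3/4))
      = N * D - (real n + 2) * D / 4" .
  have N2: "2 * N = real n * real n - real n" unfolding N_def by (rule card_Pairs)
  have rn: "real n \<ge> 2" using n by simp
  have "real n * (real n - 1) > 0" using rn by simp
  hence Npos: "N > 0" using N2 by (simp add: algebra_simps)
  have key: "N * (1 / (2 * real n)) = (real n - 1) / 4"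
  proof -
    have "N = real n * (real n - 1) / 2" using N2 by (simp add: algebra_simps)
    thus ?thesis using rn by (simp add: field_simps)
  qed
  have "N * D - (real n + 2) * D / 4 \<le> N * D - (real n - 1) * D / 4"
    using D0 by (simp add: mult_right_mono)
  also have "\<dots> = N * D - (N * (1 / (2 * real n))) * D" unfolding key by simp
  also have "\<dots> = ((1 - 1 / (2 * real n)) * D) * N" by (simp add: algebra_simps)
  finally have "(N * D - (real n + 2) * D / 4) / N \<le> (1 - 1 / (2 * real n)) * D"
    using Npos by (simp add: pos_divide_le_eq)
  thus ?thesis unfolding eq D_def[symmetric] N_def[symmetric] .
qed

lemma uu_sq:
  fixes x y t :: real
  shows "(uu x y t)^2 = ((x^2 - y^2)^2 / 4) * (4 * (sin t)^2 * (cos t)^2)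
      + (x^2 * y^2) * ((cos t)^2 - (sin t)^2)^2
      + ((x^2 - y^2) * x * y) * (2 * sin t * cos t * ((cos t)^2 - (sin t)^2))"
  unfolding uu_def power2_eq_square by algebra

lemma uu_bound:
  fixes x y t :: real
  shows "2 * (uu x y t)^2 \<le> (x^2 + y^2)^2 / 2"
proof -
  define a where "a = cos t * x - sin t * y"
  define b where "b = sin t * x + cos t * y"
  have ab: "a^2 + b^2 = x^2 + y^2" unfolding a_def b_def by (rule rot_norm)
  have "4 * (a * b)^2 \<le> (a^2 + b^2)^2"
  proof -
    have "(a^2 + b^2)^2 - 4 * (a * b)^2 = (a^2 - b^2)^2" unfolding power2_eq_square by algebra
    thus ?thesis by (metis diff_ge_0_iff_ge zero_le_power2)
  qed
  thus ?thesis unfolding uu_def a_def[symmetric] b_def[symmetric] ab by simp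
qed

lemma antideriv:
  fixes A B C t :: real
  shows "((\<lambda>t. (A + B) * t / 2 + (B - A) / 2 * (sin t * cos t * ((cos t)^2 - (sin t)^2)) + C * (sin t)^2 * (cos t)^2)
     has_real_derivative
       (A * (4 * (sin t)^2 * (cos t)^2) + B * ((cos t)^2 - (sin t)^2)^2 + C * (2 * sin t * cos t * ((cos t)^2 - (sin t)^2)))) (at t)"
  apply (rule derivative_eq_intros refl | simp only: numeral_One[symmetric] zero_neq_numeral[symmetric] not_False_eq_True)+
  apply (simp add: power2_eq_square)
  using sin_cos_squared_add[of t] unfolding power2_eq_square by algebra

lemma int_u2: "((\<lambda>t. (uu x y t)^2) has_integral (pi * (x^2 + y^2)^2 / 4)) {0..2*pi}"
proof -
  define A where "A = (x^2 - y^2)^2 / 4"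
  define B where "B = x^2 * y^2"
  define C where "C = (x^2 - y^2) * x * y"
  define P where "P = (\<lambda>t::real. (A + B) * t / 2 + (B - A) / 2 * (sin t * cos t * ((cos t)^2 - (sin t)^2)) + C * (sin t)^2 * (cos t)^2)"
  have d: "(P has_vector_derivative (uu x y t)^2) (at t within {0..2*pi})" for t
  proof -
    have "(P has_real_derivative (uu x y t)^2) (at t)"
      unfolding P_def uu_sq A_def[symmetric] B_def[symmetric] C_def[symmetric] by (rule antideriv)
    thus ?thesis by (simp add: has_real_derivative_iff_has_vector_derivative has_vector_derivative_at_within)
  qed
  have "((\<lambda>t. (uu x y t)^2) has_integral (P (2*pi) - P 0)) {0..2*pi}"
    by (rule fundamental_theorem_of_calculus) (use d in auto)
  moreover have "P (2*pi) - P 0 = pi * (x^2 + y^2)^2 / 4"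
    unfolding P_def A_def B_def by (simp add: power2_eq_square field_simps)
  ultimately show ?thesis by simp
qed

lemma int_h:
  fixes R S r2 :: real
  assumes "r2 = x^2 + y^2" "r2 > 0"
  shows "((\<lambda>t. R + S * (1 - 2 * (uu x y t)^2 / r2^2)) has_integral (2 * pi * (R + 3/4 * S))) {0..<2*pi}"
proof -
  have c: "((\<lambda>t. R + S) has_integral (2*pi * (R + S))) {0..2*pi}"
    using has_integral_const_real[of "R + S" 0 "2*pi"] by simp
  have u: "((\<lambda>t. (2 * S / r2^2) * (uu x y t)^2) has_integral ((2 * S / r2^2) * (pi * r2^2 / 4))) {0..2*pi}"
    using has_integral_mult_right[OF int_u2[of x y, folded assms(1)], of "2 * S / r2^2"] .
  have "((\<lambda>t. (R + S) - (2 * S / r2^2) * (uu x y t)^2) has_integral (2*pi * (R + S) - (2 * S / r2^2) * (pi * r2^2 / 4))) {0..2*pi}"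
    by (rule has_integral_diff[OF c u])
  moreover have "2*pi * (R + S) - (2 * S / r2^2) * (pi * r2^2 / 4) = 2 * pi * (R + 3/4 * S)"
    using assms(2) by (simp add: field_simps power2_eq_square)
  moreover have "(\<lambda>t. (R + S) - (2 * S / r2^2) * (uu x y t)^2) = (\<lambda>t. R + S * (1 - 2 * (uu x y t)^2 / r2^2))"
    by (auto simp: field_simps)
  ultimately have I: "((\<lambda>t. R + S * (1 - 2 * (uu x y t)^2 / r2^2)) has_integral (2 * pi * (R + 3/4 * S))) {0..2*pi}"
    by simp
  show ?thesis
    by (rule has_integral_spike_set_eq[THEN iffD1, OF _ _ I])
       (rule negligible_subset[of "{2*pi}"]; auto)+
qed

lemma avg_angle:
  fixes R S x y :: real
  assumes r: "x^2 + y^2 > 0" and R: "R \<ge> 0" and S: "S \<ge> 0"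
  shows "(\<integral>\<^sup>+t. ennreal (R + S * (1 - 2 * (uu x y t)^2 / (x^2 + y^2)^2)) \<partial>uniform_angle) = ennreal (R + 3/4 * S)"
proof -
  define h where "h = (\<lambda>t. R + S * (1 - 2 * (uu x y t)^2 / (x^2 + y^2)^2))"
  have hnn: "h t \<ge> 0" for t
  proof -
    have "2 * (uu x y t)^2 \<le> (x^2 + y^2)^2 / 2" by (rule uu_bound)
    hence "2 * (uu x y t)^2 / (x^2 + y^2)^2 \<le> 1/2" using r by (simp add: divide_le_eq)
    thus ?thesis unfolding h_def using R S by (simp add: mult_nonneg_nonneg)
  qed
  have mh[measurable]: "h \<in> borel_measurable borel" unfolding h_def uu_def by measurable
  have em: "emeasure lborel {0..<2*pi} = ennreal (2*pi)" by simp
  have "(\<integral>\<^sup>+t. ennreal (h t) \<partial>uniform_angle) = (\<integral>\<^sup>+t. ennreal (h t) * indicator {0..<2*pi} t \<partial>lborel) / emeasure lborel {0..<2*pi}"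
    unfolding uniform_angle_def by (rule nn_integral_uniform_measure) auto
  also have "(\<integral>\<^sup>+t. ennreal (h t) * indicator {0..<2*pi} t \<partial>lborel) = ennreal (2 * pi * (R + 3/4 * S))"
    by (rule nn_integral_has_integral_lebesgue') (use hnn int_h[OF refl r] in \<open>auto simp: h_def\<close>)
  also have "ennreal (2 * pi * (R + 3/4 * S)) / emeasure lborel {0..<2*pi} = ennreal (R + 3/4 * S)"
    unfolding em using R S by (subst divide_ennreal) auto
  finally show ?thesis unfolding h_def .
qed

lemma meas_to_count:
  "(\<lambda>x. x) \<in> measurable (uniform_count_measure A) (count_space UNIV)"
  by (subst measurable_cong_sets[OF sets_uniform_count_measure_count_space refl]) simp

lemma step'_meas:
  assumes P1[measurable]: "\<And>k. (\<lambda>\<omega>. fst (P \<omega>) k) \<in> borel_measurable N"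
  and P2[measurable]: "\<And>k. (\<lambda>\<omega>. snd (P \<omega>) k) \<in> borel_measurable N"
  and Q[measurable]: "Q \<in> measurable N (coupling_input n)"
  shows "(\<lambda>\<omega>. fst (step' (P \<omega>) (Q \<omega>)) k) \<in> borel_measurable N"
    "(\<lambda>\<omega>. snd (step' (P \<omega>) (Q \<omega>)) k) \<in> borel_measurable N"
proof -
  have g: "(\<lambda>\<omega>. fst (Q \<omega>)) \<in> measurable N (count_space UNIV)"
  proof -
    have "(\<lambda>\<omega>. fst (Q \<omega>)) \<in> measurable N (uniform_count_measure {(i, j). i < j \<and> j < n})"
      using Q unfolding coupling_input_def by measurable
    from measurable_compose[OF this meas_to_count] show ?thesis .
  qed
  have th[measurable]: "(\<lambda>\<omega>. fst (snd (Q \<omega>))) \<in> borel_measurable N"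
    "(\<lambda>\<omega>. fst (snd (snd (Q \<omega>)))) \<in> borel_measurable N"
  proof -
    have A: "(\<lambda>x. x) \<in> measurable uniform_angle borel"
      by (subst measurable_cong_sets[of uniform_angle borel borel borel]) (simp_all add: uniform_angle_def)
    have Q1: "(\<lambda>\<omega>. snd (Q \<omega>)) \<in> measurable N (uniform_angle \<Otimes>\<^sub>M (uniform_angle \<Otimes>\<^sub>M uniform_angle))"
      using measurable_compose[OF Q[unfolded coupling_input_def] measurable_snd] .
    have Q2: "(\<lambda>\<omega>. snd (snd (Q \<omega>))) \<in> measurable N (uniform_angle \<Otimes>\<^sub>M uniform_angle)"
      using measurable_compose[OF Q1 measurable_snd] .
    show "(\<lambda>\<omega>. fst (snd (Q \<omega>))) \<in> borel_measurable N"
      using measurable_compose[OF measurable_compose[OF Q1 measurable_fst] A] .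
    show "(\<lambda>\<omega>. fst (snd (snd (Q \<omega>)))) \<in> borel_measurable N"
      using measurable_compose[OF measurable_compose[OF Q2 measurable_fst] A] .
  qed
  have H1: "(\<lambda>\<omega>. fst (step' (P \<omega>) (p, snd (Q \<omega>))) k) \<in> borel_measurable N" for p
  proof (cases p)
    case (Pair i j)
    show ?thesis unfolding Pair step'_def Let_def F_def fun_upd_def fst_conv snd_conv by measurable
  qed
  have H2: "(\<lambda>\<omega>. snd (step' (P \<omega>) (p, snd (Q \<omega>))) k) \<in> borel_measurable N" for p
  proof (cases p)
    case (Pair i j)
    show ?thesis unfolding Pair step'_def Let_def F_def fun_upd_def fst_conv snd_conv by measurable
  qed
  show "(\<lambda>\<omega>. fst (step' (P \<omega>) (Q \<omega>)) k) \<in> borel_measurable N"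
    using measurable_compose_countable'[where f="\<lambda>p \<omega>. fst (step' (P \<omega>) (p, snd (Q \<omega>))) k", OF H1 g] by simp
  show "(\<lambda>\<omega>. snd (step' (P \<omega>) (Q \<omega>)) k) \<in> borel_measurable N"
    using measurable_compose_countable'[where f="\<lambda>p \<omega>. snd (step' (P \<omega>) (p, snd (Q \<omega>))) k", OF H2 g] by simp
qed


lemma proc_meas:
  "(\<lambda>\<omega>. fst (proc' XY \<omega> t) k) \<in> borel_measurable (stream_space (coupling_input n)) \<and>
   (\<lambda>\<omega>. snd (proc' XY \<omega> t) k) \<in> borel_measurable (stream_space (coupling_input n))"
proof (induction t arbitrary: k)
  case 0 show ?case by simp
next
  case (Suc t)
  have A: "\<And>k. (\<lambda>\<omega>. fst (proc' XY \<omega> t) k) \<in> borel_measurable (stream_space (coupling_input n))"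
     "\<And>k. (\<lambda>\<omega>. snd (proc' XY \<omega> t) k) \<in> borel_measurable (stream_space (coupling_input n))"
    using Suc by blast+
  show ?case using step'_meas[OF A measurable_snth[of t "coupling_input n"]] by simp
qed

lemma Dist_proc_meas[measurable]:
  "(\<lambda>\<omega>. Dist n (proc' XY \<omega> t)) \<in> borel_measurable (stream_space (coupling_input m))"
proof -
  note proc_meas[THEN conjunct1, measurable] proc_meas[THEN conjunct2, measurable]
  show ?thesis unfolding Dist_def by measurable
qed

lemma Dist_step_meas[measurable]:
  "(\<lambda>x. Dist n (step' XY x)) \<in> borel_measurable (coupling_input m)"
proof -
  have A: "\<And>k. (\<lambda>x. fst ((\<lambda>_. XY) x) k) \<in> borel_measurable (coupling_input m)"
     "\<And>k. (\<lambda>x. snd ((\<lambda>_. XY) x) k) \<in> borel_measurable (coupling_input m)" by simp_all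
  note step'_meas[OF A measurable_ident, simplified, measurable]
  show ?thesis unfolding Dist_def by measurable
qed

lemma prob_space_uniform_angle: "prob_space uniform_angle"
  unfolding uniform_angle_def by (rule prob_space_uniform_measure) auto

lemma Pairs_ne: "n \<ge> 2 \<Longrightarrow> Pairs n \<noteq> {}"
proof -
  assume "n \<ge> 2"
  hence "(0, 1) \<in> Pairs n" unfolding Pairs_def by simp
  thus ?thesis by blast
qed

lemma prob_space_input: "n \<ge> 2 \<Longrightarrow> prob_space (coupling_input n)"
  unfolding coupling_input_def
  using prob_space_uniform_count_measure[OF finite_Pairs Pairs_ne, unfolded Pairs_def]
  by (intro prob_space_pair prob_space_uniform_angle) auto

lemma nn_fst_only:
  assumes "prob_space N" and [measurable]: "g \<in> borel_measurable M1"
  shows "(\<integral>\<^sup>+z. g (fst z) \<partial>(M1 \<Otimes>\<^sub>M N)) = (\<integral>\<^sup>+x. g x \<partial>M1)"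
proof -
  interpret N: prob_space N by fact
  have "(\<integral>\<^sup>+z. g (fst z) \<partial>(M1 \<Otimes>\<^sub>M N)) = (\<integral>\<^sup>+x. \<integral>\<^sup>+y. g x \<partial>N \<partial>M1)"
  proof -
    have "(\<lambda>z. g (fst z)) \<in> borel_measurable (M1 \<Otimes>\<^sub>M N)" by measurable
    from N.nn_integral_fst[OF this] show ?thesis by simp
  qed
  also have "\<dots> = (\<integral>\<^sup>+x. g x \<partial>M1)" by (simp add: N.emeasure_space_1)
  finally show ?thesis .
qed

lemma nn_snd_only:
  assumes "prob_space M1" "sigma_finite_measure N" and [measurable]: "g \<in> borel_measurable N"
  shows "(\<integral>\<^sup>+z. g (snd z) \<partial>(M1 \<Otimes>\<^sub>M N)) = (\<integral>\<^sup>+y. g y \<partial>N)"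
proof -
  interpret M1: prob_space M1 by fact
  interpret N: sigma_finite_measure N by fact
  have "(\<integral>\<^sup>+z. g (snd z) \<partial>(M1 \<Otimes>\<^sub>M N)) = (\<integral>\<^sup>+x. \<integral>\<^sup>+y. g y \<partial>N \<partial>M1)"
  proof -
    have "(\<lambda>z. g (snd z)) \<in> borel_measurable (M1 \<Otimes>\<^sub>M N)" by measurable
    from N.nn_integral_fst[OF this] show ?thesis by simp
  qed
  also have "\<dots> = (\<integral>\<^sup>+y. g y \<partial>N)" by (simp add: M1.emeasure_space_1)
  finally show ?thesis .
qed

lemma inner_int:
  assumes ij: "i < n" "j < n" "i \<noteq> j"
  shows "(\<integral>\<^sup>+z. ennreal (Dist n (step' (X, Y) ((i, j), z))) \<partial>(uniform_angle \<Otimes>\<^sub>M (uniform_angle \<Otimes>\<^sub>M uniform_angle)))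
     = ennreal ((\<Sum>k\<in>{..<n} - {i, j}. ((X k)^2 - (Y k)^2)^2) + ((X i)^2 - (Y i)^2 + ((X j)^2 - (Y j)^2))^2 * (3/4))"
proof -
  define R where "R = (\<Sum>k\<in>{..<n} - {i, j}. ((X k)^2 - (Y k)^2)^2)"
  define S where "S = ((X i)^2 - (Y i)^2 + ((X j)^2 - (Y j)^2))^2"
  have R0: "R \<ge> 0" unfolding R_def by (simp add: sum_nonneg)
  have S0: "S \<ge> 0" unfolding S_def by simp
  have eq: "Dist n (step' (X, Y) ((i, j), z)) = R + S * (1 - kk X i j (fst z) (fst (snd z)))" for z
    using dist_step[OF ij, of X Y "fst z" "fst (snd z)" "snd (snd z)"] by (simp add: R_def S_def)
  have PA: "prob_space uniform_angle" by (rule prob_space_uniform_angle)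
  have PAA: "prob_space (uniform_angle \<Otimes>\<^sub>M uniform_angle)" by (intro prob_space_pair PA)
  have SAA: "sigma_finite_measure (uniform_angle \<Otimes>\<^sub>M uniform_angle)" by (rule prob_space_imp_sigma_finite[OF PAA])
  show ?thesis
  proof (cases "X i = 0 \<and> X j = 0")
    case True
    define g where "g = (\<lambda>\<psi>. ennreal (R + S * (1 - 2 * (uu 1 0 \<psi>)^2 / (1^2 + 0^2)^2)))"
    have gm[measurable]: "g \<in> borel_measurable uniform_angle" unfolding g_def uu_def uniform_angle_def by measurable
    have "(\<integral>\<^sup>+z. ennreal (Dist n (step' (X, Y) ((i, j), z))) \<partial>(uniform_angle \<Otimes>\<^sub>M (uniform_angle \<Otimes>\<^sub>M uniform_angle)))
        = (\<integral>\<^sup>+z. (\<lambda>w. g (fst w)) (snd z) \<partial>(uniform_angle \<Otimes>\<^sub>M (uniform_angle \<Otimes>\<^sub>M uniform_angle)))"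
      unfolding eq g_def kk_def if_P[OF True] by simp
    also have "\<dots> = (\<integral>\<^sup>+w. g (fst w) \<partial>(uniform_angle \<Otimes>\<^sub>M uniform_angle))"
      by (rule nn_snd_only[OF PA SAA]) measurable
    also have "\<dots> = (\<integral>\<^sup>+\<psi>. g \<psi> \<partial>uniform_angle)"
      by (rule nn_fst_only[OF PA gm])
    also have "\<dots> = ennreal (R + 3/4 * S)"
      unfolding g_def by (rule avg_angle) (simp_all add: R0 S0)
    finally show ?thesis by (simp add: R_def S_def mult.commute)
  next
    case False
    define g where "g = (\<lambda>\<theta>. ennreal (R + S * (1 - 2 * (uu (X i) (X j) \<theta>)^2 / ((X i)^2 + (X j)^2)^2)))"
    have gm[measurable]: "g \<in> borel_measurable uniform_angle" unfolding g_def uu_def uniform_angle_def by measurable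
    have r: "(X i)^2 + (X j)^2 > 0" using pos_of_nz[OF False] by simp
    have "(\<integral>\<^sup>+z. ennreal (Dist n (step' (X, Y) ((i, j), z))) \<partial>(uniform_angle \<Otimes>\<^sub>M (uniform_angle \<Otimes>\<^sub>M uniform_angle)))
        = (\<integral>\<^sup>+z. g (fst z) \<partial>(uniform_angle \<Otimes>\<^sub>M (uniform_angle \<Otimes>\<^sub>M uniform_angle)))"
      unfolding eq g_def kk_def if_not_P[OF False] by simp
    also have "\<dots> = (\<integral>\<^sup>+\<theta>. g \<theta> \<partial>uniform_angle)"
      by (rule nn_fst_only[OF PAA gm])
    also have "\<dots> = ennreal (R + 3/4 * S)"
      unfolding g_def by (rule avg_angle[OF r R0 S0])
    finally show ?thesis by (simp add: R_def S_def mult.commute)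
  qed
qed

lemma one_step:
  assumes n: "n \<ge> 2" and nrm: "(\<Sum>k<n. (X k)^2) = (\<Sum>k<n. (Y k)^2)"
  shows "(\<integral>\<^sup>+x. ennreal (Dist n (step' (X, Y) x)) \<partial>coupling_input n)
         \<le> ennreal ((1 - 1 / (2 * real n)) * Dist n (X, Y))"
proof -
  define AA where "AA = uniform_angle \<Otimes>\<^sub>M (uniform_angle \<Otimes>\<^sub>M uniform_angle)"
  define UC where "UC = uniform_count_measure (Pairs n)"
  define a where "a = (\<lambda>k. (X k)^2 - (Y k)^2)"
  define V where "V = (\<lambda>p. (\<Sum>k\<in>{..<n} - {fst p, snd p}. (a k)^2) + (a (fst p) + a (snd p))^2 * (3/4))"
  have V0: "V p \<ge> 0" for p unfolding V_def by (simp add: sum_nonneg)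
  have PA: "prob_space uniform_angle" by (rule prob_space_uniform_angle)
  have "prob_space AA" unfolding AA_def by (intro prob_space_pair PA)
  then interpret AA: sigma_finite_measure AA by (rule prob_space_imp_sigma_finite)
  have CI: "coupling_input n = UC \<Otimes>\<^sub>M AA" unfolding coupling_input_def UC_def AA_def Pairs_def ..
  have fm: "(\<lambda>x. ennreal (Dist n (step' (X, Y) x))) \<in> borel_measurable (UC \<Otimes>\<^sub>M AA)"
    unfolding CI[symmetric] by measurable
  have "(\<integral>\<^sup>+x. ennreal (Dist n (step' (X, Y) x)) \<partial>coupling_input n)
      = (\<integral>\<^sup>+p. \<integral>\<^sup>+z. ennreal (Dist n (step' (X, Y) (p, z))) \<partial>AA \<partial>UC)"
    unfolding CI using AA.nn_integral_fst[OF fm] by simp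
  also have "\<dots> = (\<integral>\<^sup>+p. ennreal (V p) \<partial>UC)"
  proof (rule nn_integral_cong)
    fix p assume "p \<in> space UC"
    hence p: "fst p < n" "snd p < n" "fst p \<noteq> snd p" unfolding UC_def space_uniform_count_measure Pairs_def by auto
    show "(\<integral>\<^sup>+z. ennreal (Dist n (step' (X, Y) (p, z))) \<partial>AA) = ennreal (V p)"
      using inner_int[OF p, of X Y] unfolding AA_def V_def a_def by simp
  qed
  also have "\<dots> = (\<Sum>p\<in>Pairs n. ennreal (1 / real (card (Pairs n))) * ennreal (V p))"
    unfolding UC_def uniform_count_measure_def by (rule nn_integral_point_measure_finite[OF finite_Pairs])
  also have "\<dots> = ennreal ((\<Sum>p\<in>Pairs n. V p) / real (card (Pairs n)))"
  proof -
    have "(\<Sum>p\<in>Pairs n. ennreal (1 / real (card (Pairs n))) * ennreal (V p))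
        = (\<Sum>p\<in>Pairs n. ennreal (V p / real (card (Pairs n))))"
      by (rule sum.cong[OF refl]) (simp add: ennreal_mult[symmetric] V0)
    also have "\<dots> = ennreal (\<Sum>p\<in>Pairs n. V p / real (card (Pairs n)))"
      by (rule sum_ennreal) (simp add: V0)
    finally show ?thesis by (simp add: sum_divide_distrib)
  qed
  also have "\<dots> \<le> ennreal ((1 - 1 / (2 * real n)) * Dist n (X, Y))"
  proof (rule ennreal_leI)
    have s0: "(\<Sum>k<n. a k) = 0" unfolding a_def using nrm by (simp add: sum_subtractf)
    show "(\<Sum>p\<in>Pairs n. V p) / real (card (Pairs n)) \<le> (1 - 1 / (2 * real n)) * Dist n (X, Y)"
      using pair_ineq[OF n s0] unfolding V_def Dist_def a_def by simp
  qed
  finally show ?thesis .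
qed

lemma Dist_nonneg: "Dist n XY \<ge> 0"
  unfolding Dist_def by (simp add: sum_nonneg)

lemma main_bound:
  assumes n: "n \<ge> 2"
  shows "(\<Sum>k<n. (X k)^2) = (\<Sum>k<n. (Y k)^2) \<Longrightarrow>
    (\<integral>\<^sup>+\<omega>. ennreal (Dist n (proc' (X, Y) \<omega> t)) \<partial>stream_space (coupling_input n))
      \<le> ennreal ((1 - 1 / (2 * real n)) ^ t * Dist n (X, Y))"
proof (induction t arbitrary: X Y)
  interpret M: prob_space "coupling_input n" by (rule prob_space_input[OF n])
  interpret S: prob_space "stream_space (coupling_input n)" by (rule M.prob_space_stream_space)
  case 0
  show ?case by (simp add: S.emeasure_space_1)
next
  interpret M: prob_space "coupling_input n" by (rule prob_space_input[OF n])
  case (Suc t)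
  define c where "c = 1 - 1 / (2 * real n)"
  have c0: "c \<ge> 0" unfolding c_def using n by (simp add: field_simps)
  have "(\<integral>\<^sup>+\<omega>. ennreal (Dist n (proc' (X, Y) \<omega> (Suc t))) \<partial>stream_space (coupling_input n))
      = (\<integral>\<^sup>+x. \<integral>\<^sup>+\<omega>. ennreal (Dist n (proc' (X, Y) (x ## \<omega>) (Suc t))) \<partial>stream_space (coupling_input n) \<partial>coupling_input n)"
    by (rule M.nn_integral_stream_space) measurable
  also have "\<dots> = (\<integral>\<^sup>+x. \<integral>\<^sup>+\<omega>. ennreal (Dist n (proc' (step' (X, Y) x) \<omega> t)) \<partial>stream_space (coupling_input n) \<partial>coupling_input n)"
    by (simp only: proc_first)
  also have "\<dots> \<le> (\<integral>\<^sup>+x. ennreal (c ^ t * Dist n (step' (X, Y) x)) \<partial>coupling_input n)"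
  proof (rule nn_integral_mono)
    fix x assume "x \<in> space (coupling_input n)"
    then obtain i j \<theta> \<psi> \<eta> where x: "x = ((i, j), \<theta>, \<psi>, \<eta>)" and ij: "i < j" "j < n"
      unfolding coupling_input_def space_pair_measure space_uniform_count_measure by auto
    have ij': "i < n" "j < n" "i \<noteq> j" using ij by auto
    have e: "step' (X, Y) x = (fst (step' (X, Y) x), snd (step' (X, Y) x))" by simp
    have "(\<Sum>k<n. (fst (step' (X, Y) x) k)^2) = (\<Sum>k<n. (snd (step' (X, Y) x) k)^2)"
      unfolding x norm_step[OF ij'] using Suc.prems .
    from Suc.IH[OF this] e
    show "(\<integral>\<^sup>+\<omega>. ennreal (Dist n (proc' (step' (X, Y) x) \<omega> t)) \<partial>stream_space (coupling_input n))
        \<le> ennreal (c ^ t * Dist n (step' (X, Y) x))" unfolding c_def by simp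
  qed
  also have "\<dots> = ennreal (c ^ t) * (\<integral>\<^sup>+x. ennreal (Dist n (step' (X, Y) x)) \<partial>coupling_input n)"
  proof -
    have "(\<integral>\<^sup>+x. ennreal (c ^ t * Dist n (step' (X, Y) x)) \<partial>coupling_input n)
        = (\<integral>\<^sup>+x. ennreal (c ^ t) * ennreal (Dist n (step' (X, Y) x)) \<partial>coupling_input n)"
      using c0 by (simp add: ennreal_mult Dist_nonneg)
    also have "\<dots> = ennreal (c ^ t) * (\<integral>\<^sup>+x. ennreal (Dist n (step' (X, Y) x)) \<partial>coupling_input n)"
      by (rule nn_integral_cmult) measurable
    finally show ?thesis .
  qed
  also have "\<dots> \<le> ennreal (c ^ t) * ennreal (c * Dist n (X, Y))"
    by (rule mult_left_mono[OF one_step[OF n Suc.prems, folded c_def]]) simp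
  also have "\<dots> = ennreal (c ^ Suc t * Dist n (X, Y))"
  proof -
    have "ennreal (c ^ t) * ennreal (c * Dist n (X, Y)) = ennreal (c ^ t * (c * Dist n (X, Y)))"
      by (rule ennreal_mult[symmetric]) (simp_all add: c0 Dist_nonneg)
    thus ?thesis by (simp add: mult_ac)
  qed
  finally show ?case unfolding c_def .
qed

lemma dist0_le2:
  assumes "on_sphere n X0" "on_sphere n Y0"
  shows "Dist n (X0, Y0) \<le> 2"
proof -
  have X1: "(X0 k)^2 \<le> 1" if "k < n" for k
    using assms(1) member_le_sum[of k "{..<n}" "\<lambda>k. (X0 k)^2"] that unfolding on_sphere_def by simp
  have Y1: "(Y0 k)^2 \<le> 1" if "k < n" for k
    using assms(2) member_le_sum[of k "{..<n}" "\<lambda>k. (Y0 k)^2"] that unfolding on_sphere_def by simp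
  have "((X0 k)^2 - (Y0 k)^2)^2 \<le> (X0 k)^2 + (Y0 k)^2" if "k < n" for k
  proof -
    have e: "((X0 k)^2 - (Y0 k)^2)^2 = (X0 k)^2 * (X0 k)^2 + (Y0 k)^2 * (Y0 k)^2 - 2 * ((X0 k)^2 * (Y0 k)^2)"
      unfolding power2_eq_square by algebra
    have "0 \<le> (X0 k)^2 * (Y0 k)^2" by simp
    hence "((X0 k)^2 - (Y0 k)^2)^2 \<le> (X0 k)^2 * (X0 k)^2 + (Y0 k)^2 * (Y0 k)^2"
      unfolding e by linarith
    also have "\<dots> \<le> (X0 k)^2 + (Y0 k)^2"
      by (intro add_mono mult_left_le[OF X1[OF that]] mult_left_le[OF Y1[OF that]]) simp_all
    finally show ?thesis .
  qed
  hence "Dist n (X0, Y0) \<le> (\<Sum>k<n. (X0 k)^2 + (Y0 k)^2)"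
    unfolding Dist_def by (intro sum_mono) simp
  also have "\<dots> = 2" using assms unfolding on_sphere_def by (simp add: sum.distrib)
  finally show ?thesis .
qed

theorem lemma3p3:
  fixes n :: nat and X0 Y0 :: "nat \<Rightarrow> real" and t :: nat
  assumes "n \<ge> 2" and "on_sphere n X0" and "on_sphere n Y0"
  shows "(\<integral>\<^sup>+ \<omega>. ennreal (\<Sum>i<n. ((fst (coupled_process X0 Y0 \<omega> t) i)^2
                                  - (snd (coupled_process X0 Y0 \<omega> t) i)^2)^2)
            \<partial>stream_space (coupling_input n))
         \<le> ennreal (2 * (1 - 1 / (2 * real n)) ^ t)"
proof -
  define c where "c = 1 - 1 / (2 * real n)"
  have c0: "c \<ge> 0" unfolding c_def using assms(1) by (simp add: field_simps)
  have "(\<integral>\<^sup>+ \<omega>. ennreal (\<Sum>i<n. ((fst (coupled_process X0 Y0 \<omega> t) i)^2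
                                  - (snd (coupled_process X0 Y0 \<omega> t) i)^2)^2)
            \<partial>stream_space (coupling_input n))
      = (\<integral>\<^sup>+\<omega>. ennreal (Dist n (proc' (X0, Y0) \<omega> t)) \<partial>stream_space (coupling_input n))"
  proof (rule nn_integral_cong)
    fix \<omega> assume "\<omega> \<in> space (stream_space (coupling_input n))"
    hence "\<And>t. \<omega> !! t \<in> space (coupling_input n)" unfolding space_stream_space by (rule snth_in)
    hence "\<And>t. fst (\<omega> !! t) \<in> {(i, j). i < j \<and> j < n}"
      unfolding coupling_input_def space_pair_measure space_uniform_count_measure by (auto simp: mem_Times_iff)
    hence "\<And>t. fst (fst (\<omega> !! t)) < snd (fst (\<omega> !! t))" by (auto simp: case_prod_beta)
    hence "\<And>t. fst (fst (\<omega> !! t)) \<noteq> snd (fst (\<omega> !! t))" using less_imp_neq by blast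
    thus "ennreal (\<Sum>i<n. ((fst (coupled_process X0 Y0 \<omega> t) i)^2 - (snd (coupled_process X0 Y0 \<omega> t) i)^2)^2)
        = ennreal (Dist n (proc' (X0, Y0) \<omega> t))"
      using proc_eq[of \<omega> X0 Y0 t] unfolding Dist_def by simp
  qed
  also have "\<dots> \<le> ennreal (c ^ t * Dist n (X0, Y0))"
    unfolding c_def by (rule main_bound[OF assms(1)]) (use assms(2,3) in \<open>simp add: on_sphere_def\<close>)
  also have "\<dots> \<le> ennreal (2 * c ^ t)"
  proof (rule ennreal_leI)
    have "c ^ t * Dist n (X0, Y0) \<le> c ^ t * 2"
      using dist0_le2[OF assms(2,3)] c0 by (intro mult_left_mono) simp_all
    thus "c ^ t * Dist n (X0, Y0) \<le> 2 * c ^ t" by (simp add: mult.commute)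
  qed
  finally show ?thesis unfolding c_def .
qed

end
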